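(* Under the standing assumptions below, if $n\ge 1/\alpha-1$, then $\hat Q^{\mathrm{oracle}}_{1-\alpha}<\frac{n}{\sqrt{n+1}}$ almost surely.
   Context: Setting: $n\ge 2$, $d\ge 1$ integers, $\alpha\in(0,1)$, $[m]:=\{1,\dots,m\}$. $E^1,\dots,E^{n+1}$ are exchangeable random vectors in $\mathbb{R}^d$. Assumption A: for each $j\in[d]$, the distribution of $E^i_j$ has no point masses, $E^i_j\ge0$ a.s., $\mathbb{E}[E^i_j]<\infty$, $0<\mathrm{Var}(E^i_j)<\infty$, and $E^1_j,\dots,E^{n+1}_j$ are a.s. pairwise distinct. Quantile: for $x=(x_1,\dots,x_n)\in\mathbb{R}^n$, $\hat Q_{1-\alpha}(x)$ is the $\lceil(1-\alpha)(n+1)\rceil$-th smallest value of the multiset $\{x_1,\dots,x_n,+\infty\}$. Oracle statistics: $\hat\mu^{\mathrm{oracle}}_j=\frac1{n+1}\sum_{i=1}^{n+1}E^i_j$, $\hat\sigma^{\mathrm{oracle}}_j=\sqrt{\frac1n\sum_{i=1}^{n+1}(E^i_j-\hat\mu^{\mathrm{oracle}}_j)^2}$. $\Phi(t;\mu,\sigma):=\max_{1\le j\le d}\frac{t_j-\mu_j}{\sigma_j}$. $S^i_{\mathrm{oracle}}:=\Phi(E^i;\hat\mu^{\mathrm{oracle}},\hat\sigma^{\mathrm{oracle}})$, and $\hat Q^{\mathrm{oracle}}_{1-\alpha}:=\hat Q_{1-\alpha}(S^1_{\mathrm{oracle}},\dots,S^n_{\mathrm{oracle}})$. *)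

theory Defs
  imports "HOL-Probability.Probability"
begin

definition quantile_hat :: "real \<Rightarrow> nat \<Rightarrow> (nat \<Rightarrow> real) \<Rightarrow> ereal" where
  "quantile_hat \<alpha> n x =
     sort (map (\<lambda>i. ereal (x i)) [1..<Suc n] @ [\<infinity>]) ! (nat \<lceil>(1 - \<alpha>) * real (Suc n)\<rceil> - 1)"

definition mu_oracle :: "nat \<Rightarrow> (nat \<Rightarrow> real ^ 'd) \<Rightarrow> 'd \<Rightarrow> real" where
  "mu_oracle n E j = (1 / real (Suc n)) * (\<Sum>i = 1..Suc n. E i $ j)"

definition sigma_oracle :: "nat \<Rightarrow> (nat \<Rightarrow> real ^ 'd) \<Rightarrow> 'd \<Rightarrow> real" where
  "sigma_oracle n E j = sqrt ((1 / real n) * (\<Sum>i = 1..Suc n. (E i $ j - mu_oracle n E j)\<^sup>2))"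

definition Phi :: "real ^ 'd \<Rightarrow> ('d::finite \<Rightarrow> real) \<Rightarrow> ('d \<Rightarrow> real) \<Rightarrow> real" where
  "Phi t \<mu> \<sigma> = Max (range (\<lambda>j. (t $ j - \<mu> j) / \<sigma> j))"

definition score_oracle :: "nat \<Rightarrow> (nat \<Rightarrow> real ^ 'd::finite) \<Rightarrow> nat \<Rightarrow> real" where
  "score_oracle n E i = Phi (E i) (mu_oracle n E) (sigma_oracle n E)"

definition Q_oracle :: "real \<Rightarrow> nat \<Rightarrow> (nat \<Rightarrow> real ^ 'd::finite) \<Rightarrow> ereal" where
  "Q_oracle \<alpha> n E = quantile_hat \<alpha> n (score_oracle n E)"

end

theory Submission
  imports Defs
begin

lemma key_ineq:
  fixes x :: "nat \<Rightarrow> real" and n k :: nat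
  assumes n2: "n \<ge> 2" and k: "k \<in> {1..Suc n}" and inj: "inj_on x {1..Suc n}"
  defines "m \<equiv> (1 / real (Suc n)) * (\<Sum>i = 1..Suc n. x i)"
  defines "s \<equiv> sqrt ((1 / real n) * (\<Sum>i = 1..Suc n. (x i - m)\<^sup>2))"
  shows "(x k - m) / s < real n / sqrt (real (Suc n))"
proof -
  define d where "d i = x i - m" for i
  define A where "A = {1..Suc n} - {k}"
  have finA: "finite A" and cardA: "card A = n" using k by (auto simp: A_def)
  have sumd: "(\<Sum>i = 1..Suc n. d i) = 0"
    by (simp add: d_def sum_subtractf m_def)
  have split: "(\<Sum>i = 1..Suc n. f i) = f k + (\<Sum>i\<in>A. f i)" for f :: "nat \<Rightarrow> real"
    using k unfolding A_def by (metis finite_atLeastAtMost sum.remove)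
  have sumA: "(\<Sum>i\<in>A. d i) = - d k" using sumd split[of d] by linarith
  define c where "c = - d k / n"
  have npos: "real n > 0" using n2 by simp
  have expand: "(\<Sum>i\<in>A. (d i - c)\<^sup>2) = (\<Sum>i\<in>A. (d i)\<^sup>2) - 2 * c * (\<Sum>i\<in>A. d i) + real n * c\<^sup>2"
    by (simp add: power2_diff sum_subtractf sum.distrib sum_distrib_left sum_distrib_right cardA mult_ac)
  have eq2: "(\<Sum>i\<in>A. (d i - c)\<^sup>2) = (\<Sum>i\<in>A. (d i)\<^sup>2) - (d k)\<^sup>2 / n"
  proof -
    have "- 2 * c * (- d k) + real n * c\<^sup>2 = - (d k)\<^sup>2 / n"
      unfolding c_def using npos by (simp add: field_simps power2_eq_square)
    thus ?thesis unfolding expand sumA by linarith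
  qed
  obtain i1 i2 where i12: "i1 \<in> A" "i2 \<in> A" "i1 \<noteq> i2"
  proof -
    have "2 \<le> card A" using cardA n2 by simp
    then obtain B where "B \<subseteq> A" "card B = 2" by (meson obtain_subset_with_card_n)
    then show ?thesis using that by (auto simp: card_2_iff)
  qed
  have "x i1 \<noteq> x i2" using inj i12 unfolding A_def inj_on_def by auto
  hence "d i1 \<noteq> d i2" by (simp add: d_def)
  then obtain i0 where i0: "i0 \<in> A" "d i0 \<noteq> c" using i12 by metis
  have "0 < (\<Sum>i\<in>A. (d i - c)\<^sup>2)"
    by (rule sum_pos2[OF finA i0(1)]) (use i0 in auto)
  hence gt: "(\<Sum>i\<in>A. (d i)\<^sup>2) > (d k)\<^sup>2 / n" using eq2 by linarith
  have tot: "(\<Sum>i = 1..Suc n. (x i - m)\<^sup>2) = (d k)\<^sup>2 + (\<Sum>i\<in>A. (d i)\<^sup>2)"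
    using split[of "\<lambda>i. (d i)\<^sup>2"] by (simp add: d_def)
  define T where "T = (\<Sum>i = 1..Suc n. (x i - m)\<^sup>2)"
  have Tgt: "real n * T > real (Suc n) * (d k)\<^sup>2"
  proof -
    have "real n * (\<Sum>i\<in>A. (d i)\<^sup>2) > (d k)\<^sup>2" using gt npos by (simp add: field_simps)
    thus ?thesis unfolding T_def tot by (simp add: algebra_simps)
  qed
  have "real (Suc n) * (d k)\<^sup>2 \<ge> 0" by simp
  hence "real n * T > 0" using Tgt by linarith
  hence Tpos: "T > 0" using npos by (simp add: zero_less_mult_iff)
  have s_eq: "s = sqrt (T / n)" unfolding s_def T_def by simp
  have spos: "s > 0" unfolding s_eq using Tpos npos by simp
  show ?thesis
  proof (cases "d k \<le> 0")
    case True
    hence "(x k - m) / s \<le> 0" using spos by (simp add: d_def divide_nonpos_pos)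
    also have "0 < real n / sqrt (real (Suc n))" using npos by simp
    finally show ?thesis .
  next
    case False
    have "((x k - m) / s)\<^sup>2 = (d k)\<^sup>2 / (T / n)"
      using spos Tpos npos by (simp add: d_def power_divide s_eq)
    also have "\<dots> < (real n / sqrt (real (Suc n)))\<^sup>2"
      using mult_strict_left_mono[OF Tgt npos] Tpos npos by (simp add: power_divide field_simps power2_eq_square)
    finally have "((x k - m) / s)\<^sup>2 < (real n / sqrt (real (Suc n)))\<^sup>2" .
    thus ?thesis using npos by (smt (verit) power_mono divide_nonneg_nonneg of_nat_0_le_iff real_sqrt_ge_zero)
  qed
qed

lemma quant_lt:
  fixes x :: "nat \<Rightarrow> real"
  assumes lt: "\<And>i. i \<in> {1..n} \<Longrightarrow> x i < B" and n1: "n \<ge> 1"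
    and idx: "nat \<lceil>(1 - \<alpha>) * real (Suc n)\<rceil> \<le> n"
  shows "quantile_hat \<alpha> n x < ereal B"
proof -
  define xs where "xs = map (\<lambda>i. ereal (x i)) [1..<Suc n]"
  have srt: "sort (xs @ [\<infinity>]) = sort xs @ [\<infinity>]"
    by (rule properties_for_sort) (auto simp: sorted_append)
  define k where "k = nat \<lceil>(1 - \<alpha>) * real (Suc n)\<rceil> - 1"
  have "k < n" unfolding k_def using idx n1 by linarith
  hence klt: "k < length (sort xs)" by (simp add: xs_def)
  have "quantile_hat \<alpha> n x = sort xs ! k"
    unfolding quantile_hat_def xs_def[symmetric] k_def[symmetric] srt
    using klt by (simp add: nth_append)
  also have "sort xs ! k \<in> set xs" using klt by (metis nth_mem set_sort)
  hence "sort xs ! k < ereal B" using lt by (auto simp: xs_def)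
  finally show ?thesis .
qed

theorem lemma3p2:
  fixes M :: "'a measure" and E :: "nat \<Rightarrow> 'a \<Rightarrow> real ^ 'd::finite"
    and n :: nat and \<alpha> :: real
  assumes "prob_space M"
    and "n \<ge> 2"
    and "0 < \<alpha>" and "\<alpha> < 1"
    and rv: "\<And>i. i \<in> {1..Suc n} \<Longrightarrow> E i \<in> borel_measurable M"
    and exch: "\<And>\<pi>. \<pi> permutes {1..Suc n} \<Longrightarrow>
       distr M (PiM {1..Suc n} (\<lambda>_. borel)) (\<lambda>\<omega>. \<lambda>i\<in>{1..Suc n}. E (\<pi> i) \<omega>) =
       distr M (PiM {1..Suc n} (\<lambda>_. borel)) (\<lambda>\<omega>. \<lambda>i\<in>{1..Suc n}. E i \<omega>)"
    and no_atoms: "\<And>i j x. i \<in> {1..Suc n} \<Longrightarrow>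
       measure M {\<omega> \<in> space M. E i \<omega> $ j = x} = 0"
    and nonneg: "\<And>i j. i \<in> {1..Suc n} \<Longrightarrow> AE \<omega> in M. E i \<omega> $ j \<ge> 0"
    and mean_fin: "\<And>i j. i \<in> {1..Suc n} \<Longrightarrow> integrable M (\<lambda>\<omega>. E i \<omega> $ j)"
    and var_fin: "\<And>i j. i \<in> {1..Suc n} \<Longrightarrow> integrable M (\<lambda>\<omega>. (E i \<omega> $ j)\<^sup>2)"
    and var_pos: "\<And>i j. i \<in> {1..Suc n} \<Longrightarrow>
       prob_space.variance M (\<lambda>\<omega>. E i \<omega> $ j) > 0"
    and distinct: "\<And>j. AE \<omega> in M. \<forall>i\<in>{1..Suc n}. \<forall>k\<in>{1..Suc n}.
       i \<noteq> k \<longrightarrow> E i \<omega> $ j \<noteq> E k \<omega> $ j"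
    and n_large: "real n \<ge> 1 / \<alpha> - 1"
  shows "AE \<omega> in M. Q_oracle \<alpha> n (\<lambda>i. E i \<omega>) < ereal (real n / sqrt (real (Suc n)))"
proof -
  have idx: "nat \<lceil>(1 - \<alpha>) * real (Suc n)\<rceil> \<le> n"
  proof -
    have "1 / \<alpha> \<le> real n + 1" using n_large by simp
    hence "1 \<le> \<alpha> * (real n + 1)" using \<open>0 < \<alpha>\<close> by (simp add: field_simps)
    hence r: "(1 - \<alpha>) * real (Suc n) \<le> real n" by (simp add: algebra_simps)
    thus ?thesis using r by simp
  qed
  have "AE \<omega> in M. \<forall>j. \<forall>i\<in>{1..Suc n}. \<forall>k\<in>{1..Suc n}.
       i \<noteq> k \<longrightarrow> E i \<omega> $ j \<noteq> E k \<omega> $ j"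
    by (rule eventually_all_finite) (use distinct in blast)
  then show ?thesis
  proof (rule AE_mp, intro AE_I2 impI)
    fix \<omega>
    assume d: "\<forall>j. \<forall>i\<in>{1..Suc n}. \<forall>k\<in>{1..Suc n}.
       i \<noteq> k \<longrightarrow> E i \<omega> $ j \<noteq> E k \<omega> $ j"
    define E' where "E' = (\<lambda>i. E i \<omega>)"
    have sc: "score_oracle n E' i < real n / sqrt (real (Suc n))" if i: "i \<in> {1..Suc n}" for i
    proof -
      have "(E' i $ j - mu_oracle n E' j) / sigma_oracle n E' j < real n / sqrt (real (Suc n))" for j
      proof -
        have inj: "inj_on (\<lambda>i. E' i $ j) {1..Suc n}" using d unfolding inj_on_def E'_def by blast
        show ?thesis
          using key_ineq[OF \<open>n \<ge> 2\<close> i inj] unfolding mu_oracle_def sigma_oracle_def by simp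
      qed
      thus ?thesis unfolding score_oracle_def Phi_def
        by (subst Max_less_iff) auto
    qed
    show "Q_oracle \<alpha> n (\<lambda>i. E i \<omega>) < ereal (real n / sqrt (real (Suc n)))"
      unfolding Q_oracle_def E'_def[symmetric]
      by (rule quant_lt[OF _ _ idx]) (use sc \<open>n \<ge> 2\<close> in auto)
  qed
qed

end
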